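(* Let $P$ be a poset and let $\overline{down(P)}$ denote the topological closure of $down(P)=\{\downarrow x: x\in P\}$ in $\mathfrak{P}(P)$. Then $down(P)\subseteq \mathcal{J}(P)\subseteq \overline{down(P)}\setminus\{\emptyset\}$. In particular, $down(P)$ and $\mathcal{J}(P)$ have the same topological closure in $\mathfrak{P}(P)$.
   Context: $\mathfrak{P}(P)$ is the power set of $P$ with the topology whose basic open sets are $O(F,G)=\{X\subseteq P: F\subseteq X,\ G\cap X=\emptyset\}$ for finite $F,G\subseteq P$. $\mathcal{J}(P)$ is the set of ideals of $P$: nonempty initial segments (closed downward) which are up-directed. $\downarrow x=\{y\in P:y\leq x\}$. *)

theory Defs
  imports "HOL-Analysis.Analysis"
begin

text \<open>The poset is a carrier set P inside a type with a partial order.\<close>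

definition basic_open :: "'a set \<Rightarrow> 'a set \<Rightarrow> 'a set \<Rightarrow> 'a set set" where
  "basic_open P F G = {X. X \<subseteq> P \<and> F \<subseteq> X \<and> G \<inter> X = {}}"

definition powerset_top :: "'a set \<Rightarrow> 'a set topology" where
  "powerset_top P = topology_generated_by
     {basic_open P F G | F G. finite F \<and> finite G \<and> F \<subseteq> P \<and> G \<subseteq> P}"

definition down_set :: "'a::order set \<Rightarrow> 'a \<Rightarrow> 'a set" where
  "down_set P x = {y \<in> P. y \<le> x}"

definition downs :: "'a::order set \<Rightarrow> 'a set set" where
  "downs P = {down_set P x | x. x \<in> P}"

definition ideals :: "'a::order set \<Rightarrow> 'a set set" where
  "ideals P = {I. I \<subseteq> P \<and> I \<noteq> {}
     \<and> (\<forall>x\<in>I. \<forall>y\<in>P. y \<le> x \<longrightarrow> y \<in> I)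
     \<and> (\<forall>x\<in>I. \<forall>y\<in>I. \<exists>z\<in>I. x \<le> z \<and> y \<le> z)}"

end

theory Submission
  imports Defs
begin

lemma key:
  fixes P :: "'a::order set"
  assumes "generate_topology_on
     {basic_open P F G | F G. finite F \<and> finite G \<and> F \<subseteq> P \<and> G \<subseteq> P} T"
    and "I \<in> ideals P"
  shows "I \<in> T \<Longrightarrow> \<exists>a\<in>I. \<forall>z\<in>I. a \<le> z \<longrightarrow> down_set P z \<in> T"
  using assms(1)
proof (induction T)
  case Empty
  then show ?case by simp
next
  case (Int a b)
  then obtain x y where x: "x \<in> I" "\<forall>z\<in>I. x \<le> z \<longrightarrow> down_set P z \<in> a"
    and y: "y \<in> I" "\<forall>z\<in>I. y \<le> z \<longrightarrow> down_set P z \<in> b" by auto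
  have "\<forall>x\<in>I. \<forall>y\<in>I. \<exists>z\<in>I. x \<le> z \<and> y \<le> z" using assms(2) unfolding ideals_def mem_Collect_eq by (elim conjE)
  then obtain w where "w \<in> I" "x \<le> w" "y \<le> w" using x(1) y(1) by blast
  then show ?case using x y by (intro bexI[of _ w]) (auto intro: order_trans)
next
  case (UN K)
  then obtain k where "k \<in> K" "I \<in> k" by auto
  with UN.IH[OF this] show ?case by blast
next
  case (Basis s)
  then obtain F G where s: "s = basic_open P F G" "finite F" "finite G" "F \<subseteq> P" "G \<subseteq> P"
    by auto
  have I: "I \<subseteq> P" "I \<noteq> {}" "\<forall>x\<in>I. \<forall>y\<in>P. y \<le> x \<longrightarrow> y \<in> I"
    "\<forall>x\<in>I. \<forall>y\<in>I. \<exists>z\<in>I. x \<le> z \<and> y \<le> z" using assms(2) unfolding ideals_def by auto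
  have FI: "F \<subseteq> I" "G \<inter> I = {}" using Basis.prems s unfolding basic_open_def by auto
  have "\<exists>a\<in>I. \<forall>f\<in>F. f \<le> a" using \<open>finite F\<close> FI(1)
  proof (induction F)
    case empty then show ?case using I(2) by auto
  next
    case (insert f F)
    then obtain a where "a \<in> I" "\<forall>f\<in>F. f \<le> a" by auto
    moreover obtain w where "w \<in> I" "a \<le> w" "f \<le> w" using I(4) insert.prems \<open>a \<in> I\<close> by blast
    ultimately show ?case by (intro bexI[of _ w]) (auto intro: order_trans)
  qed
  then obtain a where a: "a \<in> I" "\<forall>f\<in>F. f \<le> a" by blast
  have "down_set P z \<in> s" if "z \<in> I" "a \<le> z" for z
  proof -
    have "down_set P z \<subseteq> I" using I(3) that(1) unfolding down_set_def by auto
    moreover have "F \<subseteq> down_set P z" using a that s(4) unfolding down_set_def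
      by (auto intro: order_trans)
    ultimately show ?thesis using FI(2) s(1) unfolding basic_open_def down_set_def by auto
  qed
  then show ?case using a by blast
qed

theorem lemma3p2:
  fixes P :: "'a::order set"
  shows "downs P \<subseteq> ideals P
       \<and> ideals P \<subseteq> (powerset_top P closure_of downs P) - {{}}
       \<and> powerset_top P closure_of downs P = powerset_top P closure_of ideals P"
proof -
  have A: "downs P \<subseteq> ideals P"
    unfolding downs_def ideals_def down_set_def by (auto intro: order_trans)
  have ts: "topspace (powerset_top P) = Pow P"
  proof -
    have "basic_open P {} {} = Pow P" unfolding basic_open_def by auto
    then have "Pow P \<subseteq> \<Union>{basic_open P F G | F G. finite F \<and> finite G \<and> F \<subseteq> P \<and> G \<subseteq> P}"
      by blast
    moreover have "\<Union>{basic_open P F G | F G. finite F \<and> finite G \<and> F \<subseteq> P \<and> G \<subseteq> P} \<subseteq> Pow P"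
      unfolding basic_open_def by auto
    ultimately show ?thesis unfolding powerset_top_def by simp
  qed
  have B: "ideals P \<subseteq> (powerset_top P closure_of downs P) - {{}}"
  proof
    fix I assume I: "I \<in> ideals P"
    have "I \<in> powerset_top P closure_of downs P"
      unfolding closure_of_def
    proof (intro CollectI conjI allI impI)
      show "I \<in> topspace (powerset_top P)" using I ts unfolding ideals_def by auto
    next
      fix T assume "I \<in> T \<and> openin (powerset_top P) T"
      then have "I \<in> T" "generate_topology_on
         {basic_open P F G | F G. finite F \<and> finite G \<and> F \<subseteq> P \<and> G \<subseteq> P} T"
        unfolding powerset_top_def openin_topology_generated_by_iff by auto
      from key[OF this(2) I this(1)] obtain a where "a \<in> I" "down_set P a \<in> T" by auto
      moreover have "a \<in> P" using I \<open>a \<in> I\<close> unfolding ideals_def by auto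
      ultimately show "\<exists>y\<in>downs P. y \<in> T" unfolding downs_def by auto
    qed
    moreover have "I \<noteq> {}" using I unfolding ideals_def by auto
    ultimately show "I \<in> (powerset_top P closure_of downs P) - {{}}" by auto
  qed
  have C: "powerset_top P closure_of downs P = powerset_top P closure_of ideals P"
  proof
    show "powerset_top P closure_of downs P \<subseteq> powerset_top P closure_of ideals P"
      using A by (rule closure_of_mono)
    have "powerset_top P closure_of ideals P \<subseteq>
          powerset_top P closure_of (powerset_top P closure_of downs P)"
      using B by (intro closure_of_mono) auto
    then show "powerset_top P closure_of ideals P \<subseteq> powerset_top P closure_of downs P"
      by simp
  qed
  show ?thesis using A B C by blast
qed

end
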